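(* Let $(M,\varphi,\xi,\eta,g)$ be a $3$-dimensional $C_{12}$-manifold with Levi-Civita connection $\nabla$, let $\omega=-g(\nabla_\xi\xi,\cdot)$, let $\psi$ be the $g$-dual vector field of $\omega$, and assume that $\omega$ is closed and that $\psi$ vanishes nowhere. Write $|\psi|={\rm e}^{\rho}$ and $V={\rm e}^{-\rho}\psi$. Then (1) $\nabla_{\varphi V}V=(-{\rm e}^{\rho}+\operatorname{div}V)\,\varphi V$; (2) $\nabla_{\varphi V}\varphi V=({\rm e}^{\rho}-\operatorname{div}V)\,V$.
   Context: An almost contact metric manifold $(M^{2n+1},\varphi,\xi,\eta,g)$ consists of a Riemannian metric $g$, a $(1,1)$-tensor field $\varphi$, a vector field $\xi$ and a $1$-form $\eta$ with $\eta(\xi)=1$, $\varphi^2X=-X+\eta(X)\xi$, $g(\varphi X,\varphi Y)=g(X,Y)-\eta(X)\eta(Y)$. It is a $C_{12}$-manifold if its Levi-Civita connection satisfies $(\nabla_X\varphi)Y=\eta(X)\big(\omega(\varphi Y)\xi+\eta(Y)\varphi\psi\big)$ for all vector fields $X,Y$, where $\omega=-g(\nabla_\xi\xi,\cdot)$ and $\psi$ is the $g$-dual of $\omega$. Under the stated assumptions $\{\xi,V,\varphi V\}$ is an orthonormal frame. $\operatorname{div}V$ is the Riemannian divergence of $V$. *)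

theory Defs
  imports "HOL-Analysis.Analysis"
begin

text \<open>Local-coordinate model of a 3-dimensional Riemannian manifold: an open set U of
  real^3 (a chart domain). Vectors at a point are elements of real^3, the metric is a
  matrix field G, (1,1)-tensors are matrix fields, 1-forms are covector fields
  (represented by their component vectors, alpha(X) = a p \<bullet> X).\<close>

type_synonym vec3 = "real^3"

definition partial :: "3 \<Rightarrow> (vec3 \<Rightarrow> real) \<Rightarrow> vec3 \<Rightarrow> real" where
  "partial i f p = frechet_derivative f (at p) (axis i 1)"

fun Ck :: "nat \<Rightarrow> vec3 set \<Rightarrow> (vec3 \<Rightarrow> real) \<Rightarrow> bool" where
  "Ck 0 U f = continuous_on U f"
| "Ck (Suc k) U f = ((\<forall>p\<in>U. f differentiable (at p)) \<and> (\<forall>i. Ck k U (partial i f)))"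

definition smooth_fun :: "vec3 set \<Rightarrow> (vec3 \<Rightarrow> real) \<Rightarrow> bool" where
  "smooth_fun U f = (\<forall>k. Ck k U f)"

definition smooth_vf :: "vec3 set \<Rightarrow> (vec3 \<Rightarrow> vec3) \<Rightarrow> bool" where
  "smooth_vf U X = (\<forall>i. smooth_fun U (\<lambda>p. X p $ i))"

definition smooth_tf :: "vec3 set \<Rightarrow> (vec3 \<Rightarrow> real^3^3) \<Rightarrow> bool" where
  "smooth_tf U A = (\<forall>i j. smooth_fun U (\<lambda>p. A p $ i $ j))"

definition gm :: "(vec3 \<Rightarrow> real^3^3) \<Rightarrow> vec3 \<Rightarrow> vec3 \<Rightarrow> vec3 \<Rightarrow> real" where
  "gm G p u v = u \<bullet> (G p *v v)"

definition riemannian_metric :: "vec3 set \<Rightarrow> (vec3 \<Rightarrow> real^3^3) \<Rightarrow> bool" where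
  "riemannian_metric U G \<longleftrightarrow> smooth_tf U G \<and>
     (\<forall>p\<in>U. transpose (G p) = G p \<and> (\<forall>v. v \<noteq> 0 \<longrightarrow> gm G p v v > 0))"

definition christoffel :: "(vec3 \<Rightarrow> real^3^3) \<Rightarrow> vec3 \<Rightarrow> 3 \<Rightarrow> 3 \<Rightarrow> 3 \<Rightarrow> real" where
  "christoffel G p i j k = (1/2) * (\<Sum>l\<in>UNIV. matrix_inv (G p) $ k $ l *
      (partial i (\<lambda>q. G q $ j $ l) p + partial j (\<lambda>q. G q $ i $ l) p
       - partial l (\<lambda>q. G q $ i $ j) p))"

text \<open>Levi-Civita covariant derivative (nabla_X Y)(p) of a vector field Y in the
  direction of the tangent vector X at p.\<close>
definition LC :: "(vec3 \<Rightarrow> real^3^3) \<Rightarrow> (vec3 \<Rightarrow> vec3) \<Rightarrow> vec3 \<Rightarrow> vec3 \<Rightarrow> vec3" where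
  "LC G Y p X = (\<chi> k. frechet_derivative Y (at p) X $ k +
      (\<Sum>i\<in>UNIV. \<Sum>j\<in>UNIV. christoffel G p i j k * X $ i * Y p $ j))"

definition divergence :: "(vec3 \<Rightarrow> real^3^3) \<Rightarrow> (vec3 \<Rightarrow> vec3) \<Rightarrow> vec3 \<Rightarrow> real" where
  "divergence G Y p = (\<Sum>i\<in>UNIV. LC G Y p (axis i 1) $ i)"

text \<open>(nabla_X phi) Y at p, for vector fields X, Y.\<close>
definition LC_tf :: "(vec3 \<Rightarrow> real^3^3) \<Rightarrow> (vec3 \<Rightarrow> real^3^3) \<Rightarrow> (vec3 \<Rightarrow> vec3)
    \<Rightarrow> (vec3 \<Rightarrow> vec3) \<Rightarrow> vec3 \<Rightarrow> vec3" where
  "LC_tf G Phi X Y p = LC G (\<lambda>q. Phi q *v Y q) p (X p) - Phi p *v LC G Y p (X p)"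

definition almost_contact_metric ::
  "vec3 set \<Rightarrow> (vec3 \<Rightarrow> real^3^3) \<Rightarrow> (vec3 \<Rightarrow> vec3) \<Rightarrow> (vec3 \<Rightarrow> vec3) \<Rightarrow> (vec3 \<Rightarrow> real^3^3) \<Rightarrow> bool"
  where
  "almost_contact_metric U Phi xi eta G \<longleftrightarrow>
     riemannian_metric U G \<and> smooth_tf U Phi \<and> smooth_vf U xi \<and> smooth_vf U eta \<and>
     (\<forall>p\<in>U. eta p \<bullet> xi p = 1 \<and>
        (\<forall>X. Phi p *v (Phi p *v X) = - X + (eta p \<bullet> X) *\<^sub>R xi p) \<and>
        (\<forall>X Y. gm G p (Phi p *v X) (Phi p *v Y) = gm G p X Y - (eta p \<bullet> X) * (eta p \<bullet> Y)))"

definition omega_cov :: "(vec3 \<Rightarrow> real^3^3) \<Rightarrow> (vec3 \<Rightarrow> vec3) \<Rightarrow> vec3 \<Rightarrow> vec3" where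
  "omega_cov G xi p = (\<chi> j. - gm G p (LC G xi p (xi p)) (axis j 1))"

definition psi_vf :: "(vec3 \<Rightarrow> real^3^3) \<Rightarrow> (vec3 \<Rightarrow> vec3) \<Rightarrow> vec3 \<Rightarrow> vec3" where
  "psi_vf G xi p = matrix_inv (G p) *v omega_cov G xi p"

definition C12_manifold ::
  "vec3 set \<Rightarrow> (vec3 \<Rightarrow> real^3^3) \<Rightarrow> (vec3 \<Rightarrow> vec3) \<Rightarrow> (vec3 \<Rightarrow> vec3) \<Rightarrow> (vec3 \<Rightarrow> real^3^3) \<Rightarrow> bool"
  where
  "C12_manifold U Phi xi eta G \<longleftrightarrow> almost_contact_metric U Phi xi eta G \<and>
     (\<forall>X Y. smooth_vf U X \<longrightarrow> smooth_vf U Y \<longrightarrow> (\<forall>p\<in>U.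
        LC_tf G Phi X Y p = (eta p \<bullet> X p) *\<^sub>R
          ((omega_cov G xi p \<bullet> (Phi p *v Y p)) *\<^sub>R xi p
           + (eta p \<bullet> Y p) *\<^sub>R (Phi p *v psi_vf G xi p))))"

definition closed_form :: "vec3 set \<Rightarrow> (vec3 \<Rightarrow> vec3) \<Rightarrow> bool" where
  "closed_form U a \<longleftrightarrow> (\<forall>p\<in>U. \<forall>i j. partial i (\<lambda>q. a q $ j) p = partial j (\<lambda>q. a q $ i) p)"

end

theory Submission
  imports Defs
begin

lemma differentiable_transform_open:
  assumes "f differentiable (at p)" "open U" "p \<in> U" "\<forall>q\<in>U. f q = g q"
  shows "g differentiable (at p)"
  using assms unfolding differentiable_def by (metis has_derivative_transform_within_open)

lemma fd_cong:
  assumes "f differentiable (at p)" "open U" "p \<in> U" "\<forall>q\<in>U. f q = g q"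
  shows "frechet_derivative g (at p) = frechet_derivative f (at p)"
proof -
  have "(f has_derivative frechet_derivative f (at p)) (at p)"
    using assms(1) frechet_derivative_works by blast
  then have "(g has_derivative frechet_derivative f (at p)) (at p)"
    using has_derivative_transform_within_open assms by metis
  then show ?thesis using frechet_derivative_at by metis
qed

lemma vec_differentiable_iff:
  "((f::'a::real_normed_vector \<Rightarrow> real^'n) differentiable (at p)) \<longleftrightarrow> (\<forall>k. (\<lambda>q. f q $ k) differentiable (at p))"
  using differentiable_componentwise_within[of f p UNIV]
  by (auto simp: Basis_vec_def inner_axis)

lemma fd_component:
  assumes "(f::'a::real_normed_vector \<Rightarrow> real^'n) differentiable (at p)"
  shows "frechet_derivative f (at p) h $ k = frechet_derivative (\<lambda>q. f q $ k) (at p) h"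
proof -
  have "(f has_derivative frechet_derivative f (at p)) (at p)"
    using assms frechet_derivative_works by blast
  then have "((\<lambda>q. f q $ k) has_derivative (\<lambda>h. frechet_derivative f (at p) h $ k)) (at p)"
    using bounded_linear.has_derivative[OF bounded_linear_vec_nth] by blast
  then show ?thesis using frechet_derivative_at by metis
qed

lemma fd_partial:
  assumes "(f::vec3 \<Rightarrow> real) differentiable (at p)"
  shows "frechet_derivative f (at p) h = (\<Sum>i\<in>UNIV. h$i * partial i f p)"
proof -
  have "(f has_derivative frechet_derivative f (at p)) (at p)"
    using assms frechet_derivative_works by blast
  then have L: "linear (frechet_derivative f (at p))"
    using has_derivative_linear by blast
  have "frechet_derivative f (at p) h = frechet_derivative f (at p) (\<Sum>i\<in>UNIV. h$i *\<^sub>R axis i 1)"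
    using basis_expansion[of h] by (simp add: scalar_mult_eq_scaleR)
  also have "\<dots> = (\<Sum>i\<in>UNIV. h$i * frechet_derivative f (at p) (axis i 1))"
    using L by (simp add: linear_sum linear_cmul)
  finally show ?thesis by (simp add: partial_def)
qed

lemma Ck_const: "Ck k U (\<lambda>_. c)"
proof (induction k arbitrary: c)
  case 0 then show ?case by simp
next
  case (Suc k)
  have "partial i (\<lambda>_. c) = (\<lambda>_. 0)" for i
    by (rule ext) (simp add: partial_def)
  then show ?case using Suc by simp
qed

lemma smooth_vf_const: "smooth_vf U (\<lambda>_. c)"
  by (simp add: smooth_vf_def smooth_fun_def Ck_const)

lemma smooth_diff1:
  assumes "smooth_fun U f" "p \<in> U"
  shows "f differentiable (at p)" "partial i f differentiable (at p)"
proof -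
  have "Ck 2 U f" using assms(1) smooth_fun_def by blast
  then show "f differentiable (at p)" "partial i f differentiable (at p)"
    using assms(2) by (simp_all add: numeral_2_eq_2)
qed

lemma mv_minus: "(A::real^'n^'m) *v (- x) = - (A *v x)"
  by (simp add: matrix_vector_mult_def vec_eq_iff sum_negf)
lemma mv_diff: "(A::real^'n^'m) *v (x - y) = A *v x - A *v y"
  by (simp add: matrix_vector_mult_def vec_eq_iff sum_subtractf algebra_simps)

lemma gm_add_left: "gm G p (u + v) w = gm G p u w + gm G p v w"
  by (simp add: gm_def inner_add_left)
lemma gm_add_right: "gm G p w (u + v) = gm G p w u + gm G p w v"
  by (simp add: gm_def inner_add_right matrix_vector_right_distrib)
lemma gm_scale_left: "gm G p (c *\<^sub>R u) w = c * gm G p u w"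
  by (simp add: gm_def)
lemma gm_scale_right: "gm G p w (c *\<^sub>R u) = c * gm G p w u"
  by (simp add: gm_def matrix_vector_mult_scaleR)
lemma gm_minus_left: "gm G p (- u) w = - gm G p u w"
  by (simp add: gm_def)
lemma gm_minus_right: "gm G p w (- u) = - gm G p w u"
  by (simp add: gm_def mv_minus)
lemma gm_diff_left: "gm G p (u - v) w = gm G p u w - gm G p v w"
  by (simp add: gm_def inner_diff_left)
lemma gm_diff_right: "gm G p w (u - v) = gm G p w u - gm G p w v"
  by (simp add: gm_def inner_diff_right mv_diff)
lemma gm_zero_left: "gm G p 0 w = 0" by (simp add: gm_def)
lemma gm_zero_right: "gm G p w 0 = 0" by (simp add: gm_def)

lemmas gm_lin = gm_add_left gm_add_right gm_scale_left gm_scale_right gm_minus_left gm_minus_right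
  gm_diff_left gm_diff_right gm_zero_left gm_zero_right

lemma gm_sym:
  assumes "transpose (G p) = G p"
  shows "gm G p u v = gm G p v u"
proof -
  have "u \<bullet> (G p *v v) = (u v* G p) \<bullet> v"
    by (simp add: dot_lmul_matrix)
  also have "u v* G p = transpose (G p) *v u"
    by (simp add: vector_matrix_mult_def matrix_vector_mult_def transpose_def vec_eq_iff mult.commute)
  finally show ?thesis using assms by (simp add: gm_def inner_commute)
qed

lemma acm_point:
  fixes Ph :: "real^3^3" and x e :: vec3
  assumes ex: "e \<bullet> x = 1"
    and sq: "\<forall>X. Ph *v (Ph *v X) = - X + (e \<bullet> X) *\<^sub>R x"
    and met: "\<forall>X Y. gm G p (Ph *v X) (Ph *v Y) = gm G p X Y - (e \<bullet> X) * (e \<bullet> Y)"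
    and sym: "transpose (G p) = G p"
  shows "Ph *v x = 0" "\<And>X. e \<bullet> (Ph *v X) = 0" "\<And>X. gm G p X x = e \<bullet> X"
    "gm G p x x = 1" "\<And>X Y. gm G p (Ph *v X) Y = - gm G p X (Ph *v Y)"
proof -
  define w where "w = Ph *v x"
  have x0: "x \<noteq> 0" using ex by auto
  have Pw: "Ph *v w = 0" using sq[rule_format, of x] ex by (simp add: w_def)
  have "Ph *v (Ph *v w) = 0" using Pw by simp
  then have w1: "w = (e \<bullet> w) *\<^sub>R x" using sq[rule_format, of w] by (simp add: algebra_simps)
  then have "Ph *v w = (e \<bullet> w) *\<^sub>R w" by (metis matrix_vector_mult_scaleR w_def)
  then have "(e \<bullet> w) *\<^sub>R ((e \<bullet> w) *\<^sub>R x) = 0" using Pw w1 by metis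
  then have "e \<bullet> w = 0" using x0 by simp
  then show P0: "Ph *v x = 0" using w1 w_def by simp
  show eP: "e \<bullet> (Ph *v X) = 0" for X
  proof -
    have "Ph *v (Ph *v (Ph *v X)) = - (Ph *v X)"
      using sq[rule_format, of X] P0 by (simp add: mv_diff matrix_vector_mult_scaleR)
    moreover have "Ph *v (Ph *v (Ph *v X)) = - (Ph *v X) + (e \<bullet> (Ph *v X)) *\<^sub>R x"
      using sq by blast
    ultimately have "(e \<bullet> (Ph *v X)) *\<^sub>R x = 0" by simp
    then show ?thesis using x0 by simp
  qed
  show gx: "gm G p X x = e \<bullet> X" for X
    using met[rule_format, of X x] ex P0 by (simp add: gm_zero_right)
  then show "gm G p x x = 1" using ex by simp
  show "gm G p (Ph *v X) Y = - gm G p X (Ph *v Y)" for X Y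
  proof -
    have "gm G p (Ph *v X) (Ph *v (Ph *v Y)) = gm G p X (Ph *v Y)"
      using met[rule_format, of X "Ph *v Y"] eP by simp
    moreover have "gm G p (Ph *v X) (Ph *v (Ph *v Y)) = - gm G p (Ph *v X) Y"
      using sq[rule_format, of Y] gx eP by (simp add: gm_lin)
    ultimately show ?thesis by simp
  qed
qed

lemma sym_entry:
  assumes "transpose (A::real^3^3) = A"
  shows "A $ k $ m = A $ m $ k"
proof -
  have "transpose A $ k $ m = A $ k $ m" using assms by simp
  then show ?thesis by (simp add: transpose_def)
qed

definition Gam :: "(vec3 \<Rightarrow> real^3^3) \<Rightarrow> vec3 \<Rightarrow> vec3 \<Rightarrow> vec3 \<Rightarrow> vec3" where
  "Gam G p X Y = (\<chi> k. \<Sum>i\<in>UNIV. \<Sum>j\<in>UNIV. christoffel G p i j k * X $ i * Y $ j)"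

lemma LC_split: "LC G Y p X = frechet_derivative Y (at p) X + Gam G p X (Y p)"
  by (simp add: LC_def Gam_def vec_eq_iff)

lemma gm_expand: "gm G q u v = (\<Sum>j\<in>UNIV. \<Sum>m\<in>UNIV. u$j * G q$j$m * v$m)"
  by (simp add: gm_def inner_vec_def matrix_vector_mult_def sum_distrib_left mult.assoc)

lemma low_chr:
  assumes Ginv: "G p ** matrix_inv (G p) = mat 1"
  shows "(\<Sum>k\<in>UNIV. G p$m$k * christoffel G p i j k) = (1/2) *
     (partial i (\<lambda>q. G q $ j $ m) p + partial j (\<lambda>q. G q $ i $ m) p - partial m (\<lambda>q. G q $ i $ j) p)"
proof -
  define c where "c l = partial i (\<lambda>q. G q $ j $ l) p + partial j (\<lambda>q. G q $ i $ l) p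
       - partial l (\<lambda>q. G q $ i $ j) p" for l
  have "(\<Sum>k\<in>UNIV. G p$m$k * christoffel G p i j k)
      = (1/2) * (\<Sum>k\<in>UNIV. \<Sum>l\<in>UNIV. G p$m$k * matrix_inv (G p) $ k $ l * c l)"
    by (simp add: christoffel_def c_def sum_distrib_left mult.assoc mult.left_commute)
  also have "\<dots> = (1/2) * (\<Sum>l\<in>UNIV. (\<Sum>k\<in>UNIV. G p$m$k * matrix_inv (G p) $ k $ l) * c l)"
    by (subst sum.swap) (simp add: sum_distrib_right)
  also have "\<dots> = (1/2) * (\<Sum>l\<in>UNIV. (mat 1 :: real^3^3) $ m $ l * c l)"
    by (simp add: matrix_matrix_mult_def flip: Ginv)
  also have "\<dots> = (1/2) * c m"
  proof -
    have "(\<Sum>l\<in>UNIV. (mat 1 :: real^3^3) $ m $ l * c l) = (\<Sum>l\<in>UNIV. if m = l then c l else 0)"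
      by (rule sum.cong) (auto simp: mat_def)
    then show ?thesis by simp
  qed
  finally show ?thesis by (simp add: c_def)
qed

lemma swap3:
  "(\<Sum>a\<in>(UNIV::'a::finite set). \<Sum>b\<in>(UNIV::'b::finite set). \<Sum>c\<in>(UNIV::'c::finite set). (f a b c::real))
   = (\<Sum>b\<in>UNIV. \<Sum>c\<in>UNIV. \<Sum>a\<in>UNIV. f a b c)"
proof -
  have "(\<Sum>a\<in>(UNIV::'a set). \<Sum>b\<in>(UNIV::'b set). \<Sum>c\<in>(UNIV::'c set). f a b c)
     = (\<Sum>b\<in>UNIV. \<Sum>a\<in>UNIV. \<Sum>c\<in>UNIV. f a b c)" by (rule sum.swap)
  also have "\<dots> = (\<Sum>b\<in>UNIV. \<Sum>c\<in>UNIV. \<Sum>a\<in>UNIV. f a b c)"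
    by (rule sum.cong[OF refl]) (rule sum.swap)
  finally show ?thesis .
qed

lemma reorder1:
  "gm G p (Gam G p X y) z = (\<Sum>i\<in>UNIV. \<Sum>j\<in>UNIV. \<Sum>m\<in>UNIV. X$i * y$j * z$m *
     (\<Sum>k\<in>UNIV. G p$k$m * christoffel G p i j k))" (is "_ = ?rhs")
proof -
  define F where "F k m i j = christoffel G p i j k * X$i * y$j * G p$k$m * z$m" for k m i j
  have "gm G p (Gam G p X y) z = (\<Sum>k\<in>UNIV. \<Sum>m\<in>UNIV. \<Sum>i\<in>UNIV. \<Sum>j\<in>UNIV. F k m i j)"
    by (simp add: gm_expand Gam_def F_def sum_distrib_right)
  also have "\<dots> = (\<Sum>k\<in>UNIV. \<Sum>i\<in>UNIV. \<Sum>j\<in>UNIV. \<Sum>m\<in>UNIV. F k m i j)"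
    by (rule sum.cong[OF refl], rule swap3)
  also have "\<dots> = (\<Sum>i\<in>UNIV. \<Sum>j\<in>UNIV. \<Sum>k\<in>UNIV. \<Sum>m\<in>UNIV. F k m i j)"
    by (rule swap3)
  also have "\<dots> = (\<Sum>i\<in>UNIV. \<Sum>j\<in>UNIV. \<Sum>m\<in>UNIV. \<Sum>k\<in>UNIV. F k m i j)"
    by (rule sum.cong[OF refl], rule sum.cong[OF refl], rule sum.swap)
  also have "\<dots> = ?rhs"
    by (simp add: F_def sum_distrib_left mult_ac)
  finally show ?thesis .
qed

lemma reorder2:
  shows "gm G p y (Gam G p X z) = (\<Sum>i\<in>UNIV. \<Sum>j\<in>UNIV. \<Sum>m\<in>UNIV. X$i * y$j * z$m *
     (\<Sum>k\<in>UNIV. G p$j$k * christoffel G p i m k))" (is "_ = ?rhs")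
proof -
  define F where "F j k i m = y$j * G p$j$k * (christoffel G p i m k * X$i * z$m)" for j k i m
  have "gm G p y (Gam G p X z) = (\<Sum>j\<in>UNIV. \<Sum>k\<in>UNIV. \<Sum>i\<in>UNIV. \<Sum>m\<in>UNIV. F j k i m)"
    by (simp add: gm_expand Gam_def F_def sum_distrib_left)
  also have "\<dots> = (\<Sum>j\<in>UNIV. \<Sum>i\<in>UNIV. \<Sum>m\<in>UNIV. \<Sum>k\<in>UNIV. F j k i m)"
    by (rule sum.cong[OF refl], rule swap3)
  also have "\<dots> = (\<Sum>i\<in>UNIV. \<Sum>j\<in>UNIV. \<Sum>m\<in>UNIV. \<Sum>k\<in>UNIV. F j k i m)"
    by (rule sum.swap)
  also have "\<dots> = ?rhs"
    by (simp add: F_def sum_distrib_left mult_ac)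
  finally show ?thesis .
qed

lemma GK:
  assumes sym: "transpose (G p) = G p" and Ginv: "G p ** matrix_inv (G p) = mat 1"
    and psym: "\<And>i j m. partial i (\<lambda>q. G q$j$m) p = partial i (\<lambda>q. G q$m$j) p"
  shows "gm G p (Gam G p X y) z + gm G p y (Gam G p X z) =
     (\<Sum>j\<in>UNIV. \<Sum>m\<in>UNIV. y$j * (\<Sum>i\<in>UNIV. X$i * partial i (\<lambda>q. G q$j$m) p) * z$m)"
proof -
  define d where "d i j m = partial i (\<lambda>q. G q$j$m) p" for i j m
  have A: "(\<Sum>k\<in>UNIV. G p$k$m * christoffel G p i j k) = (1/2) * (d i j m + d j i m - d m i j)" for i j m
  proof -
    have s: "G p $ k $ m = G p $ m $ k" for k using sym by (rule sym_entry)
    have "(\<Sum>k\<in>UNIV. G p$k$m * christoffel G p i j k) = (\<Sum>k\<in>UNIV. G p$m$k * christoffel G p i j k)"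
      by (rule sum.cong[OF refl]) (simp only: s)
    then show ?thesis using low_chr[of G p, OF Ginv] by (simp add: d_def)
  qed
  have B: "(\<Sum>k\<in>UNIV. G p$j$k * christoffel G p i m k) = (1/2) * (d i m j + d m i j - d j i m)" for i j m
    using low_chr[of G p, OF Ginv] by (simp add: d_def)
  have dsym: "d i m j = d i j m" for i j m using psym by (simp add: d_def)
  have "gm G p (Gam G p X y) z + gm G p y (Gam G p X z) =
     (\<Sum>i\<in>UNIV. \<Sum>j\<in>UNIV. \<Sum>m\<in>UNIV. X$i * y$j * z$m * ((1/2) * (d i j m + d j i m - d m i j))
        + X$i * y$j * z$m * ((1/2) * (d i m j + d m i j - d j i m)))"
    unfolding reorder1 reorder2 A B by (simp only: sum.distrib)
  also have "\<dots> = (\<Sum>i\<in>UNIV. \<Sum>j\<in>UNIV. \<Sum>m\<in>UNIV. y$j * (X$i * d i j m) * z$m)"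
  proof (rule sum.cong[OF refl], rule sum.cong[OF refl], rule sum.cong[OF refl])
    fix i j m
    show "X$i * y$j * z$m * ((1/2) * (d i j m + d j i m - d m i j))
        + X$i * y$j * z$m * ((1/2) * (d i m j + d m i j - d j i m)) = y$j * (X$i * d i j m) * z$m"
      unfolding dsym[of i j m] by (simp add: algebra_simps)
  qed
  also have "\<dots> = (\<Sum>j\<in>UNIV. \<Sum>m\<in>UNIV. \<Sum>i\<in>UNIV. y$j * (X$i * d i j m) * z$m)"
    by (rule swap3)
  also have "\<dots> = (\<Sum>j\<in>UNIV. \<Sum>m\<in>UNIV. y$j * (\<Sum>i\<in>UNIV. X$i * d i j m) * z$m)"
    by (simp add: sum_distrib_left sum_distrib_right)
  finally show ?thesis by (simp add: d_def)
qed

lemma comp_hd: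
  assumes "(f::'a::real_normed_vector \<Rightarrow> real^'n) differentiable (at p)"
  shows "((\<lambda>q. f q $ k) has_derivative (\<lambda>h. frechet_derivative f (at p) h $ k)) (at p)"
proof -
  have "(f has_derivative frechet_derivative f (at p)) (at p)"
    using assms frechet_derivative_works by blast
  then show ?thesis
    using bounded_linear.has_derivative[OF bounded_linear_vec_nth] by blast
qed

lemma real_hd:
  assumes "(f::'a::real_normed_vector \<Rightarrow> real) differentiable (at p)"
  shows "(f has_derivative frechet_derivative f (at p)) (at p)"
  using assms frechet_derivative_works by blast

lemma psym_lemma:
  fixes G :: "vec3 \<Rightarrow> real^3^3"
  assumes "open U" "p \<in> U" "\<forall>q\<in>U. transpose (G q) = G q"
    and "(\<lambda>q. G q $ m $ j) differentiable (at p)"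
  shows "partial i (\<lambda>q. G q$j$m) p = partial i (\<lambda>q. G q$m$j) p"
proof -
  have "\<forall>q\<in>U. G q $ m $ j = G q $ j $ m" using assms(3) sym_entry by blast
  then have "frechet_derivative (\<lambda>q. G q$j$m) (at p) = frechet_derivative (\<lambda>q. G q$m$j) (at p)"
    using fd_cong[OF assms(4) assms(1,2), of "\<lambda>q. G q$j$m"] by blast
  then show ?thesis by (simp add: partial_def)
qed

lemma MC:
  assumes U: "open U" "p \<in> U"
    and Gd: "\<And>i j. (\<lambda>q. G q $ i $ j) differentiable (at p)"
    and Gs: "\<forall>q\<in>U. transpose (G q) = G q"
    and Ginv: "G p ** matrix_inv (G p) = mat 1"
    and Yd: "Y differentiable (at p)" and Zd: "Z differentiable (at p)"
  shows "((\<lambda>q. gm G q (Y q) (Z q)) has_derivative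
     (\<lambda>X. gm G p (LC G Y p X) (Z p) + gm G p (Y p) (LC G Z p X))) (at p)"
proof -
  define DY where "DY = frechet_derivative Y (at p)"
  define DZ where "DZ = frechet_derivative Z (at p)"
  define DG where "DG j m = frechet_derivative (\<lambda>q. G q $ j $ m) (at p)" for j m
  have hY: "\<And>j. ((\<lambda>q. Y q$j) has_derivative (\<lambda>h. DY h $ j)) (at p)"
    using comp_hd[OF Yd] DY_def by blast
  have hZ: "\<And>j. ((\<lambda>q. Z q$j) has_derivative (\<lambda>h. DZ h $ j)) (at p)"
    using comp_hd[OF Zd] DZ_def by blast
  have hG: "\<And>j m. ((\<lambda>q. G q$j$m) has_derivative DG j m) (at p)"
    using real_hd[OF Gd] unfolding DG_def by blast
  have H: "((\<lambda>q. \<Sum>j\<in>UNIV. \<Sum>m\<in>UNIV. Y q$j * G q$j$m * Z q$m) has_derivative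
     (\<lambda>h. \<Sum>j\<in>UNIV. \<Sum>m\<in>UNIV. (Y p$j * G p$j$m) * (DZ h$m) + (Y p$j * DG j m h + DY h$j * G p$j$m) * Z p$m)) (at p)"
    by (intro has_derivative_sum has_derivative_mult hY hZ hG)
  have psym: "\<And>i j m. partial i (\<lambda>q. G q$j$m) p = partial i (\<lambda>q. G q$m$j) p"
    using psym_lemma[OF U Gs Gd] by blast
  have DGp: "DG j m X = (\<Sum>i\<in>UNIV. X$i * partial i (\<lambda>q. G q$j$m) p)" for j m X
    unfolding DG_def by (rule fd_partial[OF Gd])
  have eq: "(\<Sum>j\<in>UNIV. \<Sum>m\<in>UNIV. (Y p$j * G p$j$m) * (DZ X$m) + (Y p$j * DG j m X + DY X$j * G p$j$m) * Z p$m)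
     = gm G p (LC G Y p X) (Z p) + gm G p (Y p) (LC G Z p X)" for X
  proof -
    have "gm G p (LC G Y p X) (Z p) + gm G p (Y p) (LC G Z p X)
      = gm G p (DY X) (Z p) + gm G p (Y p) (DZ X) + (gm G p (Gam G p X (Y p)) (Z p) + gm G p (Y p) (Gam G p X (Z p)))"
      by (simp add: LC_split DY_def DZ_def gm_lin)
    also have "\<dots> = gm G p (DY X) (Z p) + gm G p (Y p) (DZ X) +
       (\<Sum>j\<in>UNIV. \<Sum>m\<in>UNIV. Y p$j * (\<Sum>i\<in>UNIV. X$i * partial i (\<lambda>q. G q$j$m) p) * Z p$m)"
      using GK[of G p, OF _ Ginv psym] Gs U by simp
    also have "\<dots> = (\<Sum>j\<in>UNIV. \<Sum>m\<in>UNIV. DY X$j * G p$j$m * Z p$m) + (\<Sum>j\<in>UNIV. \<Sum>m\<in>UNIV. Y p$j * G p$j$m * DZ X$m)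
       + (\<Sum>j\<in>UNIV. \<Sum>m\<in>UNIV. Y p$j * DG j m X * Z p$m)"
      by (simp add: gm_expand DGp)
    also have "\<dots> = (\<Sum>j\<in>UNIV. \<Sum>m\<in>UNIV. (Y p$j * G p$j$m) * (DZ X$m) + (Y p$j * DG j m X + DY X$j * G p$j$m) * Z p$m)"
      by (simp add: sum.distrib algebra_simps)
    finally show ?thesis by simp
  qed
  have fe: "(\<lambda>q. gm G q (Y q) (Z q)) = (\<lambda>q. \<Sum>j\<in>UNIV. \<Sum>m\<in>UNIV. Y q$j * G q$j$m * Z q$m)"
    by (simp add: gm_expand)
  show ?thesis unfolding fe using H eq by simp
qed

lemma vec_hd_iff:
  "((f::'a::real_normed_vector \<Rightarrow> real^'n) has_derivative D) (at p) \<longleftrightarrow>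
   (\<forall>k. ((\<lambda>q. f q $ k) has_derivative (\<lambda>h. D h $ k)) (at p))"
  using has_derivative_componentwise_within[of f D p UNIV]
  by (auto simp: Basis_vec_def inner_axis)

lemma const_on_open_deriv:
  assumes "(f has_derivative D) (at q)" "open U" "q \<in> U" "\<forall>r\<in>U. f r = c"
  shows "D = (\<lambda>_. 0)"
proof -
  have "((\<lambda>_. c) has_derivative D) (at q)"
    using has_derivative_transform_within_open[OF assms(1,2,3)] assms(4) by simp
  moreover have "((\<lambda>_. c) has_derivative (\<lambda>_. 0)) (at q)" by simp
  ultimately show ?thesis using has_derivative_unique by blast
qed

lemma mv_hd:
  fixes Ph :: "vec3 \<Rightarrow> real^3^3" and Y :: "vec3 \<Rightarrow> vec3"
  assumes Pd: "\<And>i j. (\<lambda>q. Ph q $ i $ j) differentiable (at p)" and Yd: "Y differentiable (at p)"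
  shows "((\<lambda>q. Ph q *v Y q) has_derivative (\<lambda>h. (\<chi> k. \<Sum>j\<in>UNIV. frechet_derivative (\<lambda>q. Ph q $ k $ j) (at p) h * Y p $ j)
       + Ph p *v frechet_derivative Y (at p) h)) (at p)"
proof -
  have "((\<lambda>q. (Ph q *v Y q) $ k) has_derivative (\<lambda>h. ((\<chi> k. \<Sum>j\<in>UNIV. frechet_derivative (\<lambda>q. Ph q $ k $ j) (at p) h * Y p $ j)
       + Ph p *v frechet_derivative Y (at p) h) $ k)) (at p)" for k
  proof -
    have "((\<lambda>q. \<Sum>j\<in>UNIV. Ph q $ k $ j * Y q $ j) has_derivative
      (\<lambda>h. \<Sum>j\<in>UNIV. Ph p $ k $ j * frechet_derivative Y (at p) h $ j + frechet_derivative (\<lambda>q. Ph q $ k $ j) (at p) h * Y p $ j)) (at p)"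
      by (intro has_derivative_sum has_derivative_mult real_hd[OF Pd] comp_hd[OF Yd])
    then show ?thesis
      by (simp add: matrix_vector_mult_def sum.distrib algebra_simps)
  qed
  then show ?thesis using vec_hd_iff by blast
qed

lemma inv_props:
  assumes "invertible (A::real^'n^'n)"
  shows "A ** matrix_inv A = mat 1" "matrix_inv A ** A = mat 1"
proof -
  have "\<exists>A'. A ** A' = mat 1 \<and> A' ** A = mat 1" using assms invertible_def by blast
  then have "A ** matrix_inv A = mat 1 \<and> matrix_inv A ** A = mat 1"
    unfolding matrix_inv_def by (rule someI_ex)
  then show "A ** matrix_inv A = mat 1" "matrix_inv A ** A = mat 1" by auto
qed

lemma posdef_invertible:
  assumes "\<forall>v. v \<noteq> 0 \<longrightarrow> gm G q v v > 0"
  shows "invertible (G q)"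
proof -
  have "inj ((*v) (G q))"
  proof (rule injI)
    fix u v assume "G q *v u = G q *v v"
    then have "G q *v (u - v) = 0" by (simp add: mv_diff)
    then have "gm G q (u - v) (u - v) = 0" by (simp add: gm_def)
    then show "u = v" using assms[rule_format, of "u - v"] by (cases "u - v = 0") auto
  qed
  then have "det (matrix ((*v) (G q))) \<noteq> 0"
    using det_nz_iff_inj[of "(*v) (G q)"] by (simp add: matrix_vector_mul_linear)
  then show ?thesis by (simp add: invertible_det_nz)
qed

lemma omega_eq:
  assumes "transpose (G q) = G q"
  shows "omega_cov G xi q = - (G q *v LC G xi q (xi q))"
proof -
  have "gm G q w (axis j 1) = (G q *v w) $ j" for w j
  proof -
    have "gm G q w (axis j 1) = (\<Sum>i\<in>UNIV. w $ i * G q $ i $ j)"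
      by (simp add: gm_def matrix_vector_mult_basis inner_vec_def column_def)
    also have "\<dots> = (\<Sum>i\<in>UNIV. G q $ j $ i * w $ i)"
      by (rule sum.cong[OF refl]) (simp add: sym_entry[OF assms, of _ j])
    finally show ?thesis by (simp add: matrix_vector_mult_def)
  qed
  then show ?thesis by (simp add: omega_cov_def vec_eq_iff)
qed

lemma psi_eq:
  assumes "transpose (G q) = G q" "invertible (G q)"
  shows "psi_vf G xi q = - LC G xi q (xi q)"
  using assms inv_props[OF assms(2)]
  by (simp add: psi_vf_def omega_eq matrix_vector_mul_assoc mv_minus)

lemma gm_axis_sum: "(\<Sum>i\<in>UNIV. gm G p u (axis i 1) * w$i) = gm G p u w"
proof -
  have "(\<Sum>i\<in>UNIV. gm G p u (axis i 1) * w$i) = (\<Sum>i\<in>UNIV. \<Sum>j\<in>UNIV. u$j * G p$j$i * w$i)"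
    by (simp add: gm_def matrix_vector_mult_basis column_def inner_vec_def sum_distrib_right)
  also have "\<dots> = (\<Sum>j\<in>UNIV. \<Sum>i\<in>UNIV. u$j * G p$j$i * w$i)" by (rule sum.swap)
  also have "\<dots> = gm G p u w" by (simp add: gm_expand)
  finally show ?thesis .
qed

lemma frame:
  assumes sym: "transpose (G p) = G p"
    and o: "gm G p b1 b1 = 1" "gm G p b2 b2 = 1" "gm G p b3 b3 = 1"
       "gm G p b1 b2 = 0" "gm G p b1 b3 = 0" "gm G p b2 b3 = 0"
  shows "W = gm G p b1 W *\<^sub>R b1 + gm G p b2 W *\<^sub>R b2 + gm G p b3 W *\<^sub>R b3"
proof -
  define bf :: "3 \<Rightarrow> vec3" where "bf a = (if a = 1 then b1 else if a = 2 then b2 else b3)" for a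
  have gs: "gm G p u v = gm G p v u" for u v using gm_sym[of G p, OF sym] .
  have orth: "gm G p (bf a) (bf c) = (if a = c then 1 else 0)" for a c
    using o gs[of b2 b1] gs[of b3 b1] gs[of b3 b2] exhaust_3[of a] exhaust_3[of c]
    by (auto simp: bf_def)
  define B :: "real^3^3" where "B = (\<chi> i a. bf a $ i)"
  define C :: "real^3^3" where "C = (\<chi> a i. gm G p (bf a) (axis i 1))"
  have Cv: "(C *v w) $ a = gm G p (bf a) w" for w a
    by (simp add: C_def matrix_vector_mult_def gm_axis_sum)
  have "C ** B = mat 1"
  proof -
    have "(C ** B) $ a $ c = gm G p (bf a) (bf c)" for a c
      by (simp add: C_def B_def matrix_matrix_mult_def gm_axis_sum)
    then show ?thesis by (simp add: vec_eq_iff orth mat_def)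
  qed
  then have BC: "B ** C = mat 1" using matrix_left_right_inverse by blast
  have "W = B *v (C *v W)" by (simp add: matrix_vector_mul_assoc BC)
  also have "\<dots> = gm G p b1 W *\<^sub>R b1 + gm G p b2 W *\<^sub>R b2 + gm G p b3 W *\<^sub>R b3"
  proof -
    have b: "bf 1 = b1" "bf 2 = b2" "bf 3 = b3" by (simp_all add: bf_def)
    show ?thesis
    proof -
      have Bv: "(B *v y)$k = bf 1 $ k * y$1 + bf 2$k * y$2 + bf 3 $ k * y $ 3" for y k
        by (simp add: B_def matrix_vector_mult_def sum_3)
      show ?thesis unfolding vec_eq_iff Bv Cv b by (simp add: mult.commute)
    qed
  qed
  finally show ?thesis .
qed

lemma div_frame:
  assumes sym: "transpose (G p) = G p"
    and o: "gm G p b1 b1 = 1" "gm G p b2 b2 = 1" "gm G p b3 b3 = 1"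
       "gm G p b1 b2 = 0" "gm G p b1 b3 = 0" "gm G p b2 b3 = 0"
    and L: "linear L"
  shows "(\<Sum>i\<in>UNIV. L (axis i 1) $ i) = gm G p (L b1) b1 + gm G p (L b2) b2 + gm G p (L b3) b3"
proof -
  have e: "L (axis i 1) = gm G p b1 (axis i 1) *\<^sub>R L b1 + gm G p b2 (axis i 1) *\<^sub>R L b2 + gm G p b3 (axis i 1) *\<^sub>R L b3" for i
  proof -
    have f: "axis i 1 = gm G p b1 (axis i 1) *\<^sub>R b1 + gm G p b2 (axis i 1) *\<^sub>R b2 + gm G p b3 (axis i 1) *\<^sub>R b3"
      by (rule frame[of G p, OF assms(1-7)])
    show ?thesis
      using arg_cong[where f=L, OF f] by (simp only: linear_add[OF L] linear_cmul[OF L])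
  qed
  have gs: "gm G p u v = gm G p v u" for u v using gm_sym[of G p, OF sym] .
  have "(\<Sum>i\<in>UNIV. L (axis i 1) $ i) = (\<Sum>i\<in>UNIV. gm G p b1 (axis i 1) * L b1 $ i)
     + (\<Sum>i\<in>UNIV. gm G p b2 (axis i 1) * L b2 $ i) + (\<Sum>i\<in>UNIV. gm G p b3 (axis i 1) * L b3 $ i)"
    by (simp add: e sum.distrib)
  also have "\<dots> = gm G p (L b1) b1 + gm G p (L b2) b2 + gm G p (L b3) b3"
    by (simp add: gm_axis_sum gs)
  finally show ?thesis .
qed

lemma det3_diff:
  assumes "\<And>i j. (\<lambda>q. A q $ i $ j) differentiable (at p)"
  shows "(\<lambda>q. det (A q :: real^3^3)) differentiable (at p)"
  unfolding det_3 by (intro differentiable_add differentiable_diff differentiable_mult assms)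

lemma inv_entry:
  assumes "det (A::real^3^3) \<noteq> 0"
  shows "matrix_inv A $ k $ l = det (\<chi> i j. if j = k then axis l 1 $ i else A$i$j) / det A"
proof -
  have inv: "invertible A" using assms invertible_det_nz by blast
  have "A *v (matrix_inv A *v axis l 1) = axis l 1"
    using inv_props(1)[OF inv] by (simp add: matrix_vector_mul_assoc)
  then have "matrix_inv A *v axis l 1 = (\<chi> k. det(\<chi> i j. if j=k then axis l 1 $ i else A$i$j) / det A)"
    using cramer[OF assms] by blast
  moreover have "(matrix_inv A *v axis l 1) $ k = matrix_inv A $ k $ l"
    by (simp add: matrix_vector_mult_basis column_def)
  ultimately show ?thesis by simp
qed

lemma inv_diff:
  fixes G :: "vec3 \<Rightarrow> real^3^3"
  assumes U: "open U" "p \<in> U" and nz: "\<forall>q\<in>U. det (G q) \<noteq> 0"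
    and Gd: "\<And>i j. (\<lambda>q. G q $ i $ j) differentiable (at p)"
  shows "(\<lambda>q. matrix_inv (G q) $ k $ l) differentiable (at p)"
proof -
  have d1: "(\<lambda>q. det (\<chi> i j. if j = k then axis l 1 $ i else G q$i$j)) differentiable (at p)"
  proof (rule det3_diff)
    fix i j
    show "(\<lambda>q. (\<chi> i j. if j = k then axis l 1 $ i else G q$i$j) $ i $ j) differentiable (at p)"
      using Gd by (cases "j = k") simp_all
  qed
  define F where "F q = det (\<chi> i j. if j = k then axis l 1 $ i else G q$i$j) / det (G q)" for q
  have Fd: "F differentiable (at p)"
    unfolding F_def using d1 det3_diff[OF Gd] nz U by (intro differentiable_divide) auto
  have "\<forall>q\<in>U. F q = matrix_inv (G q) $ k $ l"
  proof
    fix q assume "q \<in> U"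
    then show "F q = matrix_inv (G q) $ k $ l" unfolding F_def using inv_entry[of "G q" k l] nz by simp
  qed
  then show ?thesis using differentiable_transform_open[OF Fd U, of "\<lambda>q. matrix_inv (G q) $ k $ l"] by blast
qed

lemma sqrt_diff:
  assumes "(f::vec3 \<Rightarrow> real) differentiable (at p)" "f p > 0"
  shows "(\<lambda>q. sqrt (f q)) differentiable (at p)"
proof -
  obtain D where "(f has_derivative D) (at p)" using assms(1) differentiable_def by blast
  then have "((\<lambda>q. sqrt (f q)) has_derivative (\<lambda>h. inverse (sqrt (f p)) / 2 * D h)) (at p)"
    using assms(2) by (intro derivative_eq_intros) auto
  then show ?thesis using differentiable_def by blast
qed

lemma psi_diff:
  fixes G :: "vec3 \<Rightarrow> real^3^3"
  assumes U: "open U" "p \<in> U" and Gs: "\<forall>q\<in>U. transpose (G q) = G q"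
    and Ginv: "\<forall>q\<in>U. invertible (G q)" and sG: "smooth_tf U G" and sxi: "smooth_vf U xi"
  shows "psi_vf G xi differentiable (at p)"
proof -
  define E where "E q = - (\<chi> k. (\<Sum>i\<in>UNIV. xi q$i * partial i (\<lambda>r. xi r$k) q) +
      (\<Sum>i\<in>UNIV. \<Sum>j\<in>UNIV. christoffel G q i j k * xi q$i * xi q$j))" for q
  have xid: "\<And>q. q \<in> U \<Longrightarrow> xi differentiable (at q)"
    using sxi smooth_diff1(1) vec_differentiable_iff unfolding smooth_vf_def by blast
  have "\<forall>q\<in>U. E q = psi_vf G xi q"
  proof
    fix q assume q: "q \<in> U"
    have "LC G xi q (xi q) $ k = (\<Sum>i\<in>UNIV. xi q$i * partial i (\<lambda>r. xi r$k) q) +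
      (\<Sum>i\<in>UNIV. \<Sum>j\<in>UNIV. christoffel G q i j k * xi q$i * xi q$j)" for k
    proof -
      have "(\<lambda>r. xi r $ k) differentiable (at q)" using xid[OF q] vec_differentiable_iff by blast
      then show ?thesis
        by (simp add: LC_def fd_component[OF xid[OF q]] fd_partial)
    qed
    then have "LC G xi q (xi q) = - E q" by (simp add: E_def vec_eq_iff)
    then show "E q = psi_vf G xi q" using psi_eq[of G q xi] Gs Ginv q by simp
  qed
  moreover have "E differentiable (at p)"
  proof -
    have xc: "(\<lambda>q. xi q $ i) differentiable (at p)" for i
      using sxi smooth_diff1(1) U unfolding smooth_vf_def by blast
    have xp: "partial i (\<lambda>r. xi r $ k) differentiable (at p)" for i k
      using sxi smooth_diff1(2) U unfolding smooth_vf_def by blast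
    have Gd: "(\<lambda>q. G q $ i $ j) differentiable (at p)" for i j
      using sG smooth_diff1(1) U unfolding smooth_tf_def by blast
    have Gp: "partial m (\<lambda>q. G q $ i $ j) differentiable (at p)" for m i j
      using sG smooth_diff1(2) U unfolding smooth_tf_def by blast
    have nz: "\<forall>q\<in>U. det (G q) \<noteq> 0" using Ginv invertible_det_nz by blast
    have Id: "(\<lambda>q. matrix_inv (G q) $ k $ l) differentiable (at p)" for k l
      using inv_diff[OF U nz Gd] .
    have cd: "(\<lambda>q. christoffel G q i j k) differentiable (at p)" for i j k
      unfolding christoffel_def
      by (intro differentiable_mult differentiable_const differentiable_sum ballI
            differentiable_add differentiable_diff Id Gp) auto
    have "(\<lambda>q. E q $ k) differentiable (at p)" for k
    proof -
      have "(\<lambda>q. - ((\<Sum>i\<in>UNIV. xi q$i * partial i (\<lambda>r. xi r$k) q) +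
         (\<Sum>i\<in>UNIV. \<Sum>j\<in>UNIV. christoffel G q i j k * xi q$i * xi q$j))) differentiable (at p)"
        by (intro differentiable_minus differentiable_add differentiable_sum differentiable_mult ballI
              xc xp cd) auto
      then show ?thesis by (simp add: E_def)
    qed
    then show ?thesis using vec_differentiable_iff by blast
  qed
  ultimately show ?thesis using differentiable_transform_open[OF _ U] by blast
qed

lemma Gam_lin: "linear (\<lambda>X. Gam G p X Y)"
  by (rule linearI) (simp_all add: Gam_def vec_eq_iff sum.distrib sum_distrib_left algebra_simps)

lemma Gam_zero: "Gam G p X 0 = 0"
  by (simp add: Gam_def vec_eq_iff)

theorem lemma4p3:
  fixes U :: "(real^3) set" and Phi G :: "real^3 \<Rightarrow> real^3^3" and xi eta :: "real^3 \<Rightarrow> real^3"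
    and rho :: "real^3 \<Rightarrow> real" and V :: "real^3 \<Rightarrow> real^3"
  assumes "open U"
    and "C12_manifold U Phi xi eta G"
    and "closed_form U (omega_cov G xi)"
    and "\<forall>p\<in>U. psi_vf G xi p \<noteq> 0"
    and "\<forall>p\<in>U. exp (rho p) = sqrt (gm G p (psi_vf G xi p) (psi_vf G xi p))"
    and "\<forall>p\<in>U. V p = exp (- rho p) *\<^sub>R psi_vf G xi p"
  shows "\<forall>p\<in>U. LC G V p (Phi p *v V p) = (- exp (rho p) + divergence G V p) *\<^sub>R (Phi p *v V p) \<and>
      LC G (\<lambda>q. Phi q *v V q) p (Phi p *v V p) = (exp (rho p) - divergence G V p) *\<^sub>R V p"
proof -
  have oU: "open U" using assms(1) .
  have acm: "almost_contact_metric U Phi xi eta G" using assms(2) unfolding C12_manifold_def by blast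
  have c12: "\<And>X Y. smooth_vf U X \<Longrightarrow> smooth_vf U Y \<Longrightarrow> \<forall>p\<in>U. LC_tf G Phi X Y p = (eta p \<bullet> X p) *\<^sub>R
          ((omega_cov G xi p \<bullet> (Phi p *v Y p)) *\<^sub>R xi p
           + (eta p \<bullet> Y p) *\<^sub>R (Phi p *v psi_vf G xi p))"
    using assms(2) unfolding C12_manifold_def by blast
  have rm: "riemannian_metric U G" and sPhi: "smooth_tf U Phi" and sxi: "smooth_vf U xi"
    and pt: "\<forall>p\<in>U. eta p \<bullet> xi p = 1 \<and>
        (\<forall>X. Phi p *v (Phi p *v X) = - X + (eta p \<bullet> X) *\<^sub>R xi p) \<and>
        (\<forall>X Y. gm G p (Phi p *v X) (Phi p *v Y) = gm G p X Y - (eta p \<bullet> X) * (eta p \<bullet> Y))"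
    using acm unfolding almost_contact_metric_def by auto
  have sG: "smooth_tf U G" and Gs: "\<forall>q\<in>U. transpose (G q) = G q"
    and Gpos: "\<forall>q\<in>U. \<forall>v. v \<noteq> 0 \<longrightarrow> gm G q v v > 0"
    using rm unfolding riemannian_metric_def by auto
  have Ginvt: "\<forall>q\<in>U. invertible (G q)" using Gpos posdef_invertible by blast
  have Ginv: "\<And>q. q \<in> U \<Longrightarrow> G q ** matrix_inv (G q) = mat 1" using Ginvt inv_props by blast
  have Gd: "\<And>q i j. q \<in> U \<Longrightarrow> (\<lambda>r. G r $ i $ j) differentiable (at q)"
    using sG smooth_diff1(1) unfolding smooth_tf_def by blast
  have Phid: "\<And>q i j. q \<in> U \<Longrightarrow> (\<lambda>r. Phi r $ i $ j) differentiable (at q)"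
    using sPhi smooth_diff1(1) unfolding smooth_tf_def by blast
  have xid: "\<And>q. q \<in> U \<Longrightarrow> xi differentiable (at q)"
    using sxi smooth_diff1(1) vec_differentiable_iff unfolding smooth_vf_def by blast
  have gsym: "\<And>q u v. q \<in> U \<Longrightarrow> gm G q u v = gm G q v u" using Gs gm_sym by blast
  have sq: "\<And>q X. q \<in> U \<Longrightarrow> Phi q *v (Phi q *v X) = - X + (eta q \<bullet> X) *\<^sub>R xi q" using pt by blast
  have AP: "Phi q *v xi q = 0 \<and> (\<forall>X. eta q \<bullet> (Phi q *v X) = 0) \<and> (\<forall>X. gm G q X (xi q) = eta q \<bullet> X)
      \<and> gm G q (xi q) (xi q) = 1 \<and> (\<forall>X Y. gm G q (Phi q *v X) Y = - gm G q X (Phi q *v Y))" if q: "q \<in> U" for q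
  proof -
    have a1: "eta q \<bullet> xi q = 1" and a2: "\<forall>X. Phi q *v (Phi q *v X) = - X + (eta q \<bullet> X) *\<^sub>R xi q"
      and a3: "\<forall>X Y. gm G q (Phi q *v X) (Phi q *v Y) = gm G q X Y - (eta q \<bullet> X) * (eta q \<bullet> Y)"
      using pt q by auto
    have a4: "transpose (G q) = G q" using Gs q by blast
    show ?thesis using acm_point[of "eta q" "xi q" "Phi q" G q, OF a1 a2 a3 a4] by blast
  qed
  have Phixi: "\<And>q. q \<in> U \<Longrightarrow> Phi q *v xi q = 0" using AP by blast
  have etaPhi: "\<And>q X. q \<in> U \<Longrightarrow> eta q \<bullet> (Phi q *v X) = 0" using AP by blast
  have geta: "\<And>q X. q \<in> U \<Longrightarrow> gm G q X (xi q) = eta q \<bullet> X" using AP by blast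
  have gxx: "\<And>q. q \<in> U \<Longrightarrow> gm G q (xi q) (xi q) = 1" using AP by blast
  have gskew: "\<And>q X Y. q \<in> U \<Longrightarrow> gm G q (Phi q *v X) Y = - gm G q X (Phi q *v Y)" using AP by blast
  have MCq: "((\<lambda>r. gm G r (Y r) (Z r)) has_derivative
     (\<lambda>X. gm G q (LC G Y q X) (Z q) + gm G q (Y q) (LC G Z q X))) (at q)"
    if "q \<in> U" "Y differentiable (at q)" "Z differentiable (at q)" for q Y Z
    using MC[OF oU that(1) Gd[OF that(1)] Gs Ginv[OF that(1)] that(2,3)] .
  have MC0: "gm G q (LC G Y q X) (Z q) + gm G q (Y q) (LC G Z q X) = 0"
    if "q \<in> U" "Y differentiable (at q)" "Z differentiable (at q)" "\<forall>r\<in>U. gm G r (Y r) (Z r) = c" for q Y Z c X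
  proof -
    have "(\<lambda>X. gm G q (LC G Y q X) (Z q) + gm G q (Y q) (LC G Z q X)) = (\<lambda>_. 0)"
      using const_on_open_deriv[OF MCq[OF that(1-3)] oU that(1) that(4)] .
    from fun_cong[OF this, of X] show ?thesis by simp
  qed
  have nxi_perp: "gm G q (LC G xi q X) (xi q) = 0" if q: "q \<in> U" for q X
  proof -
    have "\<forall>r\<in>U. gm G r (xi r) (xi r) = 1" using gxx by blast
    then have "gm G q (LC G xi q X) (xi q) + gm G q (xi q) (LC G xi q X) = 0"
      using MC0[OF q xid[OF q] xid[OF q]] by blast
    then show ?thesis using gsym[OF q] by simp
  qed
  have psiq: "\<And>q. q \<in> U \<Longrightarrow> psi_vf G xi q = - LC G xi q (xi q)"
    using psi_eq Gs Ginvt by blast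
  have psi_perp: "\<And>q. q \<in> U \<Longrightarrow> gm G q (psi_vf G xi q) (xi q) = 0"
    using psiq nxi_perp by (simp add: gm_minus_left)
  have gpp: "gm G q (psi_vf G xi q) (psi_vf G xi q) = exp (rho q) ^ 2" if q: "q \<in> U" for q
  proof -
    have "gm G q (psi_vf G xi q) (psi_vf G xi q) > 0" using Gpos assms(4) q by blast
    then show ?thesis using assms(5) q by simp
  qed
  have Vu: "gm G q (V q) (V q) = 1" if q: "q \<in> U" for q
  proof -
    have "gm G q (V q) (V q) = exp (- rho q) ^ 2 * exp (rho q) ^ 2"
      using assms(6) q gpp[OF q] by (simp add: gm_scale_left gm_scale_right power2_eq_square)
    also have "\<dots> = 1" by (simp add: power2_eq_square exp_minus field_simps)
    finally show ?thesis .
  qed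
  have Vh: "gm G q (V q) (xi q) = 0" if q: "q \<in> U" for q
    using assms(6) q psi_perp[OF q] by (simp add: gm_scale_left)
  have Vd: "V differentiable (at q)" if q: "q \<in> U" for q
  proof -
    have pd: "psi_vf G xi differentiable (at q)"
      using psi_diff[OF oU q Gs Ginvt sG sxi] .
    define N where "N r = gm G r (psi_vf G xi r) (psi_vf G xi r)" for r
    have Nd: "N differentiable (at q)"
      using MCq[OF q pd pd] unfolding N_def differentiable_def by blast
    have Np: "N q > 0" using Gpos assms(4) q unfolding N_def by blast
    have sd: "(\<lambda>r. 1 / sqrt (N r)) differentiable (at q)"
      using sqrt_diff[OF Nd Np] Np by (intro differentiable_divide) auto
    have "(\<lambda>r. (1 / sqrt (N r)) *\<^sub>R psi_vf G xi r) differentiable (at q)"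
      using sd pd by (rule differentiable_scaleR)
    moreover have "\<forall>r\<in>U. (1 / sqrt (N r)) *\<^sub>R psi_vf G xi r = V r"
    proof
      fix r assume r: "r \<in> U"
      have "exp (- rho r) = 1 / sqrt (N r)"
        using assms(5) r unfolding N_def by (simp add: exp_minus divide_inverse)
      then show "(1 / sqrt (N r)) *\<^sub>R psi_vf G xi r = V r" using assms(6) r by simp
    qed
    ultimately show ?thesis using differentiable_transform_open[OF _ oU q] by blast
  qed
  show ?thesis
  proof
    fix p assume p: "p \<in> U"
    define c where "c = Phi p *v V p"
    define a where "a = gm G p c (LC G V p c)"
    have etac: "eta p \<bullet> c = 0" unfolding c_def using etaPhi[OF p] .
    have e1: "LC G (\<lambda>q. Phi q *v xi q) p c = 0"
    proof -
      have "frechet_derivative (\<lambda>q. Phi q *v xi q) (at p) = frechet_derivative (\<lambda>_. 0) (at p)"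
        by (rule fd_cong[OF _ oU p]) (use Phixi in auto)
      then show ?thesis by (simp add: LC_split Phixi[OF p] Gam_zero)
    qed
    have "LC_tf G Phi (\<lambda>_. c) xi p = 0"
      using c12[OF smooth_vf_const sxi] p etac by simp
    then have Pnx: "Phi p *v LC G xi p c = 0" using e1 by (simp add: LC_tf_def)
    have nxc: "LC G xi p c = 0"
    proof -
      define w where "w = LC G xi p c"
      have "eta p \<bullet> w = 0" using geta[OF p, of w] nxi_perp[OF p] by (simp add: w_def)
      then show ?thesis using sq[OF p, of w] Pnx by (simp add: w_def)
    qed
    have VcXi: "gm G p (LC G V p c) (xi p) = 0"
      using MC0[OF p Vd[OF p] xid[OF p], of 0 c] Vh nxc by (simp add: gm_zero_right)
    have VcV: "gm G p (LC G V p c) (V p) = 0"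
      using MC0[OF p Vd[OF p] Vd[OF p], of 1 c] Vu gsym[OF p] by simp
    have o1: "gm G p (xi p) (xi p) = 1" using gxx[OF p] .
    have o2: "gm G p (V p) (V p) = 1" using Vu[OF p] .
    have o3: "gm G p c c = 1"
      using pt p Vu[OF p] Vh[OF p] geta[OF p, of "V p"] unfolding c_def by auto
    have o4: "gm G p (xi p) (V p) = 0" using Vh[OF p] gsym[OF p, of "xi p" "V p"] by simp
    have o5: "gm G p (xi p) c = 0" using geta[OF p, of c] etac gsym[OF p, of "xi p" c] by simp
    have o6: "gm G p (V p) c = 0"
    proof -
      have "gm G p c (V p) = - gm G p (V p) c" unfolding c_def using gskew[OF p] .
      then show ?thesis using gsym[OF p, of c "V p"] by simp
    qed
    have Gsp: "transpose (G p) = G p" using Gs p by blast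
    have dec: "LC G V p c = a *\<^sub>R c"
    proof -
      have "LC G V p c = gm G p (xi p) (LC G V p c) *\<^sub>R xi p + gm G p (V p) (LC G V p c) *\<^sub>R V p
          + gm G p c (LC G V p c) *\<^sub>R c"
        by (rule frame[of G p, OF Gsp o1 o2 o3 o4 o5 o6])
      moreover have "gm G p (xi p) (LC G V p c) = 0" using VcXi gsym[OF p, of "xi p" "LC G V p c"] by simp
      moreover have "gm G p (V p) (LC G V p c) = 0" using VcV gsym[OF p, of "V p" "LC G V p c"] by simp
      ultimately show ?thesis unfolding a_def by simp
    qed
    have Lin: "linear (LC G V p)"
    proof -
      have "(V has_derivative frechet_derivative V (at p)) (at p)"
        using Vd[OF p] frechet_derivative_works by blast
      then have l1: "linear (frechet_derivative V (at p))" using has_derivative_linear by blast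
      have "LC G V p = (\<lambda>X. frechet_derivative V (at p) X + Gam G p X (V p))"
        by (rule ext) (simp add: LC_split)
      then show ?thesis using linear_compose_add[OF l1 Gam_lin] by simp
    qed
    have div: "divergence G V p = gm G p (LC G V p (xi p)) (xi p) + gm G p (LC G V p (V p)) (V p)
        + gm G p (LC G V p c) c"
      unfolding divergence_def by (rule div_frame[of G p, OF Gsp o1 o2 o3 o4 o5 o6 Lin])
    have d1: "gm G p (LC G V p (xi p)) (xi p) = exp (rho p)"
    proof -
      have "gm G p (LC G V p (xi p)) (xi p) = - gm G p (V p) (LC G xi p (xi p))"
        using MC0[OF p Vd[OF p] xid[OF p], of 0 "xi p"] Vh by simp
      also have "\<dots> = gm G p (V p) (psi_vf G xi p)" using psiq[OF p] by (simp add: gm_minus_right)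
      also have "\<dots> = exp (- rho p) * exp (rho p) ^ 2"
        using assms(6) p gpp[OF p] by (simp add: gm_scale_left)
      also have "\<dots> = exp (rho p)" by (simp add: power2_eq_square exp_minus field_simps)
      finally show ?thesis .
    qed
    have d2: "gm G p (LC G V p (V p)) (V p) = 0"
      using MC0[OF p Vd[OF p] Vd[OF p], of 1 "V p"] Vu gsym[OF p] by simp
    have d3: "gm G p (LC G V p c) c = a" unfolding a_def using gsym[OF p] by simp
    have divv: "divergence G V p = exp (rho p) + a" using div d1 d2 d3 by simp
    have part1: "LC G V p c = (- exp (rho p) + divergence G V p) *\<^sub>R c"
      using dec divv by simp
    define e where "e = V p"
    have "LC_tf G Phi (\<lambda>_. c) (\<lambda>_. e) p = 0"
      using c12[OF smooth_vf_const smooth_vf_const] p etac by simp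
    then have C2: "LC G (\<lambda>q. Phi q *v e) p c = Phi p *v Gam G p c e"
      by (simp add: LC_tf_def LC_split)
    define T where "T = (\<chi> k. \<Sum>j\<in>UNIV. frechet_derivative (\<lambda>q. Phi q $ k $ j) (at p) c * e $ j)"
    have f1: "frechet_derivative (\<lambda>q. Phi q *v e) (at p) c = T"
    proof -
      have "((\<lambda>q. Phi q *v (\<lambda>_. e) q) has_derivative (\<lambda>h. (\<chi> k. \<Sum>j\<in>UNIV. frechet_derivative (\<lambda>q. Phi q $ k $ j) (at p) h * e $ j)
       + Phi p *v frechet_derivative (\<lambda>_. e) (at p) h)) (at p)"
        by (rule mv_hd[OF Phid[OF p]]) simp
      from fun_cong[OF frechet_derivative_at[OF this], of c] show ?thesis unfolding T_def by simp
    qed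
    have f2: "frechet_derivative (\<lambda>q. Phi q *v V q) (at p) c = T + Phi p *v frechet_derivative V (at p) c"
    proof -
      have "((\<lambda>q. Phi q *v V q) has_derivative (\<lambda>h. (\<chi> k. \<Sum>j\<in>UNIV. frechet_derivative (\<lambda>q. Phi q $ k $ j) (at p) h * V p $ j)
       + Phi p *v frechet_derivative V (at p) h)) (at p)"
        by (rule mv_hd[OF Phid[OF p] Vd[OF p]])
      from fun_cong[OF frechet_derivative_at[OF this], of c] show ?thesis unfolding T_def e_def by simp
    qed
    have part2: "LC G (\<lambda>q. Phi q *v V q) p c = Phi p *v LC G V p c"
    proof -
      have "T + Gam G p c (Phi p *v e) = Phi p *v Gam G p c e"
        using C2 f1 by (simp add: LC_split)
      then have "LC G (\<lambda>q. Phi q *v V q) p c = Phi p *v Gam G p c e + Phi p *v frechet_derivative V (at p) c"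
        using f2 by (simp add: LC_split e_def algebra_simps)
      also have "\<dots> = Phi p *v LC G V p c"
        by (simp add: LC_split e_def matrix_vector_right_distrib add.commute)
      finally show ?thesis .
    qed
    have "LC G (\<lambda>q. Phi q *v V q) p c = a *\<^sub>R (Phi p *v c)"
      using part2 dec by (simp add: matrix_vector_mult_scaleR)
    also have "\<dots> = - a *\<^sub>R V p"
      using sq[OF p, of "V p"] geta[OF p, of "V p"] Vh[OF p] unfolding c_def by simp
    also have "\<dots> = (exp (rho p) - divergence G V p) *\<^sub>R V p" using divv by simp
    finally show "LC G V p (Phi p *v V p) = (- exp (rho p) + divergence G V p) *\<^sub>R (Phi p *v V p) \<and>
      LC G (\<lambda>q. Phi q *v V q) p (Phi p *v V p) = (exp (rho p) - divergence G V p) *\<^sub>R V p"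
      using part1 unfolding c_def by simp
  qed
qed

end
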